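(* Let $X$ be a precubical set and $\gamma:\vec{\mathbb{S}}\to\vec{|X|}$ a stream map. Then $\gamma$ is constant if and only if the underlying continuous map $U(\gamma):\mathbb{S}\to|X|$ is null-homotopic.
   Context: Streams: a circulation on a space $X$ assigns to each open $V\subset X$ a preorder $\leqslant_V$ such that for every collection $\mathcal{O}$ of open sets, $\leqslant_{\bigcup\mathcal{O}}$ is the preorder with smallest graph containing $\bigcup_{V\in\mathcal{O}}\mathrm{graph}(\leqslant_V)$; a stream is a space with a circulation; a stream map $f:X\to Y$ is continuous with $f(x)\leqslant_V f(y)$ whenever $x\leqslant_{f^{-1}V}y$; $U$ is the forgetful functor to spaces; streams form a cocomplete category with colimits computed on underlying spaces (final circulation). $\vec{\mathbb{S}}$ is the unit circle with circulation: $z\leqslant_V z'$ iff there are reals $\theta\le\theta'$ with $z=e^{i\theta}$, $z'=e^{i\theta'}$, $e^{i[\theta,\theta']}\subset V$. Precubical sets: $\square$ is the smallest subcategory of posets and monotone maps closed under cartesian products (unit $[0]=\{0\}$) and containing $\delta_\pm:[0]\to[1]=\{0<1\}$ ($0\mapsto 0$, resp. $1$); objects $[1]^n$. A precubical set is a functor $X:\square^{op}\to\mathbf{Set}$, $X_n=X([1]^n)$. $\vec\square[1]$ is $[0,1]$ with circulation $x\leqslant_V y$ iff $x\le y$ and $[x,y]\subset V$; $\vec\square[n]$ is its $n$-fold product in streams, and $\square$-morphisms extend linearly to stream maps. The stream realization is the coend $\vec{|X|}=\int^{[1]^n}X_n\cdot\vec\square[n]$ in streams; its underlying space is the geometric realization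 $|X|$. *)

theory Defs
  imports "HOL-Analysis.Analysis"
begin

text \<open>Smallest preorder on A whose graph contains R (R is assumed to lie in A x A).\<close>
definition pclosure :: "'a set \<Rightarrow> ('a \<times> 'a) set \<Rightarrow> ('a \<times> 'a) set" where
  "pclosure A R = Id_on A \<union> R\<^sup>+"

definition is_circulation :: "'a topology \<Rightarrow> ('a set \<Rightarrow> ('a \<times> 'a) set) \<Rightarrow> bool" where
  "is_circulation T C \<longleftrightarrow>
     (\<forall>V. openin T V \<longrightarrow> C V \<subseteq> V \<times> V \<and> refl_on V (C V) \<and> trans (C V)) \<and>
     (\<forall>Ws. (\<forall>V\<in>Ws. openin T V) \<longrightarrow> C (\<Union>Ws) = pclosure (\<Union>Ws) (\<Union>V\<in>Ws. C V))"

definition stream_map ::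
  "'a topology \<Rightarrow> ('a set \<Rightarrow> ('a \<times> 'a) set) \<Rightarrow> 'b topology \<Rightarrow> ('b set \<Rightarrow> ('b \<times> 'b) set)
   \<Rightarrow> ('a \<Rightarrow> 'b) \<Rightarrow> bool" where
  "stream_map T1 C1 T2 C2 f \<longleftrightarrow> continuous_map T1 T2 f \<and>
     (\<forall>V. openin T2 V \<longrightarrow>
        (\<forall>x y. (x, y) \<in> C1 {z \<in> topspace T1. f z \<in> V} \<longrightarrow> (f x, f y) \<in> C2 V))"

definition circle_top :: "complex topology" where
  "circle_top = top_of_set (sphere 0 1)"

definition circle_circ :: "complex set \<Rightarrow> (complex \<times> complex) set" where
  "circle_circ V = {(z, z'). \<exists>\<theta> \<theta>'. \<theta> \<le> \<theta>' \<and> z = cis \<theta> \<and> z' = cis \<theta>' \<and> cis ` {\<theta>..\<theta>'} \<subseteq> V}"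

definition I_top :: "real topology" where
  "I_top = top_of_set {0..1}"

definition I_circ :: "real set \<Rightarrow> (real \<times> real) set" where
  "I_circ V = {(x, y). x \<le> y \<and> {x..y} \<subseteq> V}"

text \<open>The n-cube [0,1]^n, realised as functions nat => real vanishing from n on.\<close>
definition cube :: "nat \<Rightarrow> (nat \<Rightarrow> real) set" where
  "cube n = {t. (\<forall>i<n. 0 \<le> t i \<and> t i \<le> 1) \<and> (\<forall>i\<ge>n. t i = 0)}"

definition cube_top :: "nat \<Rightarrow> (nat \<Rightarrow> real) topology" where
  "cube_top n = subtopology (product_topology (\<lambda>_. euclideanreal) UNIV) (cube n)"

text \<open>The n-fold product of the directed interval in streams: the largest circulation on the
  product space making all projections stream maps (the join of all such circulations,
  i.e. the pointwise preorder closure of their union).\<close>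
definition cube_circ :: "nat \<Rightarrow> (nat \<Rightarrow> real) set \<Rightarrow> ((nat \<Rightarrow> real) \<times> (nat \<Rightarrow> real)) set" where
  "cube_circ n V = pclosure V (\<Union>{C V | C. is_circulation (cube_top n) C \<and>
        (\<forall>i<n. stream_map (cube_top n) C I_top I_circ (\<lambda>t. t i))})"

text \<open>Objects [1]^n are bool lists of length n (False < True); a morphism [1]^m -> [1]^n is a
  triple (m, n, f) with f normalised outside its domain.\<close>
type_synonym cmor = "nat \<times> nat \<times> (bool list \<Rightarrow> bool list)"

definition cmor :: "nat \<Rightarrow> nat \<Rightarrow> (bool list \<Rightarrow> bool list) \<Rightarrow> cmor" where
  "cmor m n f = (m, n, \<lambda>v. if length v = m then f v else [])"

text \<open>The smallest subcategory of posets closed under cartesian products (unit [0]) and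
  containing delta_-, delta_+.\<close>
inductive_set Box :: "cmor set" where
  Box_id: "cmor n n id \<in> Box"
| Box_dminus: "cmor 0 1 (\<lambda>_. [False]) \<in> Box"
| Box_dplus: "cmor 0 1 (\<lambda>_. [True]) \<in> Box"
| Box_comp: "(m, n, f) \<in> Box \<Longrightarrow> (n, k, g) \<in> Box \<Longrightarrow> cmor m k (g \<circ> f) \<in> Box"
| Box_prod: "(m, n, f) \<in> Box \<Longrightarrow> (m', n', g) \<in> Box \<Longrightarrow>
     cmor (m + m') (n + n') (\<lambda>v. f (take m v) @ g (drop m v)) \<in> Box"

text \<open>A precubical set: a functor Box^op -> Set, given by the sets X n and the action.\<close>
definition precubical :: "(nat \<Rightarrow> 'a set) \<Rightarrow> (cmor \<Rightarrow> 'a \<Rightarrow> 'a) \<Rightarrow> bool" where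
  "precubical X act \<longleftrightarrow>
     (\<forall>m n f x. (m, n, f) \<in> Box \<and> x \<in> X n \<longrightarrow> act (m, n, f) x \<in> X m) \<and>
     (\<forall>n x. x \<in> X n \<longrightarrow> act (cmor n n id) x = x) \<and>
     (\<forall>m n k f g x. (m, n, f) \<in> Box \<and> (n, k, g) \<in> Box \<and> x \<in> X k \<longrightarrow>
        act (cmor m k (g \<circ> f)) x = act (m, n, f) (act (n, k, g) x))"

text \<open>Linear (multilinear) extension of a cube morphism to [0,1]^m -> [0,1]^n.\<close>
definition lin :: "cmor \<Rightarrow> (nat \<Rightarrow> real) \<Rightarrow> (nat \<Rightarrow> real)" where
  "lin F t = (case F of (m, n, f) \<Rightarrow> (\<lambda>j. if j < n then
      (\<Sum>v\<in>{v::bool list. length v = m}. (if f v ! j then 1 else 0) *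
          (\<Prod>i<m. if v ! i then t i else 1 - t i))
      else 0))"

definition real_dom :: "(nat \<Rightarrow> 'a set) \<Rightarrow> (nat \<times> 'a \<times> (nat \<Rightarrow> real)) set" where
  "real_dom X = {(n, x, t). x \<in> X n \<and> t \<in> cube n}"

definition real_gen :: "(nat \<Rightarrow> 'a set) \<Rightarrow> (cmor \<Rightarrow> 'a \<Rightarrow> 'a) \<Rightarrow>
    ((nat \<times> 'a \<times> (nat \<Rightarrow> real)) \<times> (nat \<times> 'a \<times> (nat \<Rightarrow> real))) set" where
  "real_gen X act = {((m, act (m, n, f) x, t), (n, x, lin (m, n, f) t)) | m n f x t.
       (m, n, f) \<in> Box \<and> x \<in> X n \<and> t \<in> cube m}"

definition real_rel :: "(nat \<Rightarrow> 'a set) \<Rightarrow> (cmor \<Rightarrow> 'a \<Rightarrow> 'a) \<Rightarrow>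
    ((nat \<times> 'a \<times> (nat \<Rightarrow> real)) \<times> (nat \<times> 'a \<times> (nat \<Rightarrow> real))) set" where
  "real_rel X act = Id_on (real_dom X) \<union> (real_gen X act \<union> (real_gen X act)\<inverse>)\<^sup>+"

definition real_pts :: "(nat \<Rightarrow> 'a set) \<Rightarrow> (cmor \<Rightarrow> 'a \<Rightarrow> 'a) \<Rightarrow>
    (nat \<times> 'a \<times> (nat \<Rightarrow> real)) set set" where
  "real_pts X act = real_dom X // real_rel X act"

definition char_map :: "(nat \<Rightarrow> 'a set) \<Rightarrow> (cmor \<Rightarrow> 'a \<Rightarrow> 'a) \<Rightarrow> nat \<Rightarrow> 'a \<Rightarrow>
    (nat \<Rightarrow> real) \<Rightarrow> (nat \<times> 'a \<times> (nat \<Rightarrow> real)) set" where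
  "char_map X act n x t = real_rel X act `` {(n, x, t)}"

definition real_top :: "(nat \<Rightarrow> 'a set) \<Rightarrow> (cmor \<Rightarrow> 'a \<Rightarrow> 'a) \<Rightarrow>
    (nat \<times> 'a \<times> (nat \<Rightarrow> real)) set topology" where
  "real_top X act = topology (\<lambda>U. U \<subseteq> real_pts X act \<and>
     (\<forall>n x. x \<in> X n \<longrightarrow> openin (cube_top n) {t \<in> cube n. char_map X act n x t \<in> U}))"

definition real_circ :: "(nat \<Rightarrow> 'a set) \<Rightarrow> (cmor \<Rightarrow> 'a \<Rightarrow> 'a) \<Rightarrow>
    (nat \<times> 'a \<times> (nat \<Rightarrow> real)) set set \<Rightarrow>
    ((nat \<times> 'a \<times> (nat \<Rightarrow> real)) set \<times> (nat \<times> 'a \<times> (nat \<Rightarrow> real)) set) set" where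
  "real_circ X act V = pclosure V
     {(char_map X act n x s, char_map X act n x t) | n x s t.
        x \<in> X n \<and> (s, t) \<in> cube_circ n {r \<in> cube n. char_map X act n x r \<in> V}}"

end

theory Submission
  imports Defs
begin


definition ct :: "bool list \<Rightarrow> nat" where "ct v = length (filter id v)"

lemma box_ct:
  "F \<in> Box \<Longrightarrow> (case F of (m,n,f) \<Rightarrow> (\<forall>v. length v = m \<longrightarrow> length (f v) = n) \<and>
     (\<exists>c::nat. \<forall>v. length v = m \<longrightarrow> ct (f v) = ct v + c))"
proof (induction rule: Box.induct)
  case (Box_id n)
  then show ?case by (auto simp: cmor_def)
next
  case Box_dminus
  then show ?case by (auto simp: cmor_def ct_def)
next
  case Box_dplus
  then show ?case by (auto simp: cmor_def ct_def)
next
  case (Box_comp m n f k g)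
  then obtain c1 c2 where c1: "\<forall>v. length v = m \<longrightarrow> ct (f v) = ct v + c1"
     and c2: "\<forall>v. length v = n \<longrightarrow> ct (g v) = ct v + c2" by auto
  show ?case using Box_comp.IH c1 c2
    by (auto simp: cmor_def intro!: exI[of _ "c1+c2"])
next
  case (Box_prod m n f m' n' g)
  then obtain c1 c2 where c1: "\<forall>v. length v = m \<longrightarrow> ct (f v) = ct v + c1"
     and c2: "\<forall>v. length v = m' \<longrightarrow> ct (g v) = ct v + c2" by auto
  have "ct (f (take m v) @ g (drop m v)) = ct v + (c1 + c2)" if "length v = m + m'" for v
  proof -
    have "ct v = ct (take m v) + ct (drop m v)"
      by (metis append_take_drop_id ct_def filter_append length_append)
    then show ?thesis using c1 c2 that by (simp add: ct_def)
  qed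
  then show ?case using Box_prod.IH
    by (auto simp: cmor_def intro!: exI[of _ "c1+c2"])
qed

definition wt :: "(nat \<Rightarrow> real) \<Rightarrow> bool list \<Rightarrow> real" where
  "wt t v = (\<Prod>i<length v. if v!i then t i else 1 - t i)"

lemma wt_Cons: "wt t (b#v) = (if b then t 0 else 1 - t 0) * wt (\<lambda>i. t (Suc i)) v"
  unfolding wt_def length_Cons prod.lessThan_Suc_shift by simp

lemma sum_len_Suc:
  fixes F :: "bool list \<Rightarrow> real"
  shows "(\<Sum>v\<in>{v. length v = Suc m}. F v) =
     (\<Sum>v\<in>{v. length v = m}. F (True#v)) + (\<Sum>v\<in>{v. length v = m}. F (False#v))"
proof -
  let ?A = "{v::bool list. length v = m}"
  have eq: "{v::bool list. length v = Suc m} = Cons True ` ?A \<union> Cons False ` ?A"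
    by (auto simp: length_Suc_conv image_iff)
  have fin: "finite ?A" by (rule finite_list_length)
  have "(\<Sum>v\<in>{v. length v = Suc m}. F v) = (\<Sum>v\<in>Cons True ` ?A. F v) + (\<Sum>v\<in>Cons False ` ?A. F v)"
    unfolding eq by (rule sum.union_disjoint) (use fin in auto)
  also have "\<dots> = (\<Sum>v\<in>?A. F (True#v)) + (\<Sum>v\<in>?A. F (False#v))"
    by (simp add: sum.reindex)
  finally show ?thesis .
qed

lemma sum_wt: "(\<Sum>v\<in>{v. length v = m}. wt t v) = 1"
proof (induction m arbitrary: t)
  case 0
  then show ?case by (simp add: wt_def)
next
  case (Suc m)
  show ?case unfolding sum_len_Suc wt_Cons
    by (simp add: sum_distrib_left[symmetric] Suc)
qed

lemma sum_ct_wt: "(\<Sum>v\<in>{v. length v = m}. real (ct v) * wt t v) = (\<Sum>i<m. t i)"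
proof (induction m arbitrary: t)
  case 0
  then show ?case by (simp add: wt_def ct_def)
next
  case (Suc m)
  have "(\<Sum>v\<in>{v. length v = Suc m}. real (ct v) * wt t v)
     = (\<Sum>v\<in>{v. length v = m}. (1 + real (ct v)) * (t 0 * wt (\<lambda>i. t (Suc i)) v))
       + (\<Sum>v\<in>{v. length v = m}. real (ct v) * ((1 - t 0) * wt (\<lambda>i. t (Suc i)) v))"
    unfolding sum_len_Suc wt_Cons by (simp add: ct_def)
  also have "\<dots> = t 0 * (\<Sum>v\<in>{v. length v = m}. wt (\<lambda>i. t (Suc i)) v)
       + (\<Sum>v\<in>{v. length v = m}. real (ct v) * wt (\<lambda>i. t (Suc i)) v)"
    by (simp add: algebra_simps sum.distrib sum_distrib_left sum_subtractf)
  also have "\<dots> = t 0 + (\<Sum>i<m. t (Suc i))" by (simp add: sum_wt Suc)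
  also have "\<dots> = (\<Sum>i<Suc m. t i)" by (rule sum.lessThan_Suc_shift[symmetric])
  finally show ?case .
qed

lemma lin_sum:
  assumes "(m,n,f) \<in> Box"
  shows "\<exists>c::nat. (\<Sum>j<n. lin (m,n,f) t j) = (\<Sum>i<m. t i) + real c"
proof -
  from box_ct[OF assms] obtain c where len: "\<And>v. length v = m \<Longrightarrow> length (f v) = n"
    and c: "\<And>v. length v = m \<Longrightarrow> ct (f v) = ct v + c" by auto
  have "(\<Sum>j<n. lin (m,n,f) t j) =
     (\<Sum>j<n. \<Sum>v\<in>{v. length v = m}. (if f v ! j then 1 else 0) * wt t v)"
    by (simp add: lin_def wt_def)
  also have "\<dots> = (\<Sum>v\<in>{v. length v = m}. (\<Sum>j<n. (if f v ! j then 1 else 0)) * wt t v)"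
    by (simp add: sum.swap[of _ "{..<n}"] sum_distrib_right)
  also have "\<dots> = (\<Sum>v\<in>{v. length v = m}. (real (ct v) + real c) * wt t v)"
  proof (rule sum.cong[OF refl])
    fix v :: "bool list" assume "v \<in> {v. length v = m}"
    then have lv: "length v = m" by simp
    have "(\<Sum>j<n. (if f v ! j then 1 else 0::real)) = real (card {j. j < n \<and> f v ! j})"
      by (simp add: sum.If_cases Collect_conj_eq lessThan_def Int_commute)
    also have "\<dots> = real (ct (f v))" using len[OF lv] by (simp add: ct_def length_filter_conv_card)
    finally show "(\<Sum>j<n. (if f v ! j then 1 else 0)) * wt t v = (real (ct v) + real c) * wt t v"
      using c[OF lv] by simp
  qed
  also have "\<dots> = (\<Sum>i<m. t i) + real c"
    by (simp add: algebra_simps sum.distrib sum_ct_wt sum_wt sum_distrib_left[symmetric])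
  finally show ?thesis by blast
qed




definition pot :: "nat \<times> 'a \<times> (nat \<Rightarrow> real) \<Rightarrow> complex" where
  "pot p = cis (2 * pi * (\<Sum>i<fst p. snd (snd p) i))"

lemma pot_gen: "(p, q) \<in> real_gen X act \<Longrightarrow> pot p = pot q"
proof -
  assume "(p, q) \<in> real_gen X act"
  then obtain m n f x t where p: "p = (m, act (m,n,f) x, t)" and q: "q = (n, x, lin (m,n,f) t)"
    and B: "(m,n,f) \<in> Box" unfolding real_gen_def by blast
  obtain c :: nat where c: "(\<Sum>j<n. lin (m,n,f) t j) = (\<Sum>i<m. t i) + real c"
    using lin_sum[OF B] by blast
  have "pot q = cis (2 * pi * (\<Sum>i<m. t i) + 2 * pi * real c)"
    by (simp add: pot_def q c algebra_simps)
  also have "\<dots> = cis (2 * pi * (\<Sum>i<m. t i))"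
  proof -
    have c1: "cis (2 * pi * real c) = 1" by (simp add: cis_multiple_2pi)
    show ?thesis by (metis cis_mult c1 mult_1_right)
  qed
  finally show ?thesis by (simp add: pot_def p)
qed

lemma pot_rel: "(p, q) \<in> real_rel X act \<Longrightarrow> pot p = pot q"
proof -
  assume "(p, q) \<in> real_rel X act"
  then consider "p = q" | "(p, q) \<in> (real_gen X act \<union> (real_gen X act)\<inverse>)\<^sup>+"
    unfolding real_rel_def by auto
  then show ?thesis
  proof cases
    case 2
    then show ?thesis
      by (induction rule: trancl_induct) (auto dest: pot_gen)
  qed simp
qed

definition Phi :: "(nat \<times> 'a \<times> (nat \<Rightarrow> real)) set \<Rightarrow> complex" where
  "Phi S = pot (SOME p. p \<in> S)"

lemma Phi_class:
  assumes "p \<in> real_dom X"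
  shows "Phi (real_rel X act `` {p}) = pot p"
proof -
  have "p \<in> real_rel X act `` {p}" using assms by (auto simp: real_rel_def)
  then have "(SOME q. q \<in> real_rel X act `` {p}) \<in> real_rel X act `` {p}" by (rule someI)
  then show ?thesis unfolding Phi_def by (auto dest: pot_rel)
qed

lemma Phi_char:
  "x \<in> X n \<Longrightarrow> t \<in> cube n \<Longrightarrow> Phi (char_map X act n x t) = cis (2 * pi * (\<Sum>i<n. t i))"
  unfolding char_map_def by (subst Phi_class) (auto simp: real_dom_def pot_def)

lemma topspace_cube_top [simp]: "topspace (cube_top n) = cube n"
  by (auto simp: cube_top_def)

lemma char_in_pts: "x \<in> X n \<Longrightarrow> t \<in> cube n \<Longrightarrow> char_map X act n x t \<in> real_pts X act"
  unfolding char_map_def real_pts_def by (rule quotientI) (auto simp: real_dom_def)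

lemma istop_real:
  "istopology (\<lambda>U. U \<subseteq> real_pts X act \<and>
     (\<forall>n x. x \<in> X n \<longrightarrow> openin (cube_top n) {t \<in> cube n. char_map X act n x t \<in> U}))"
  unfolding istopology_def
proof (rule conjI; intro allI impI)
  fix S T
  assume S: "S \<subseteq> real_pts X act \<and> (\<forall>n x. x \<in> X n \<longrightarrow> openin (cube_top n) {t \<in> cube n. char_map X act n x t \<in> S})"
    and T: "T \<subseteq> real_pts X act \<and> (\<forall>n x. x \<in> X n \<longrightarrow> openin (cube_top n) {t \<in> cube n. char_map X act n x t \<in> T})"
  show "S \<inter> T \<subseteq> real_pts X act \<and> (\<forall>n x. x \<in> X n \<longrightarrow> openin (cube_top n) {t \<in> cube n. char_map X act n x t \<in> S \<inter> T})"
  proof (intro conjI allI impI)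
    fix n x assume "x \<in> X n"
    then have "openin (cube_top n) ({t \<in> cube n. char_map X act n x t \<in> S} \<inter> {t \<in> cube n. char_map X act n x t \<in> T})"
      using S T by blast
    moreover have "{t \<in> cube n. char_map X act n x t \<in> S \<inter> T} = {t \<in> cube n. char_map X act n x t \<in> S} \<inter> {t \<in> cube n. char_map X act n x t \<in> T}" by blast
    ultimately show "openin (cube_top n) {t \<in> cube n. char_map X act n x t \<in> S \<inter> T}" by simp
  qed (use S in auto)
next
  fix K
  assume K: "\<forall>U\<in>K. U \<subseteq> real_pts X act \<and> (\<forall>n x. x \<in> X n \<longrightarrow> openin (cube_top n) {t \<in> cube n. char_map X act n x t \<in> U})"
  show "\<Union>K \<subseteq> real_pts X act \<and> (\<forall>n x. x \<in> X n \<longrightarrow> openin (cube_top n) {t \<in> cube n. char_map X act n x t \<in> \<Union>K})"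
  proof (intro conjI allI impI)
    fix n x assume "x \<in> X n"
    then have "openin (cube_top n) (\<Union>U\<in>K. {t \<in> cube n. char_map X act n x t \<in> U})"
      using K by (intro openin_Union) auto
    moreover have "{t \<in> cube n. char_map X act n x t \<in> \<Union>K} = (\<Union>U\<in>K. {t \<in> cube n. char_map X act n x t \<in> U})" by blast
    ultimately show "openin (cube_top n) {t \<in> cube n. char_map X act n x t \<in> \<Union>K}" by simp
  qed (use K in auto)
qed

lemma openin_real_top:
  "openin (real_top X act) U \<longleftrightarrow> U \<subseteq> real_pts X act \<and>
     (\<forall>n x. x \<in> X n \<longrightarrow> openin (cube_top n) {t \<in> cube n. char_map X act n x t \<in> U})"
  unfolding real_top_def by (simp add: istop_real)

lemma topspace_real_top [simp]: "topspace (real_top X act) = real_pts X act"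
proof
  show "topspace (real_top X act) \<subseteq> real_pts X act"
    by (metis openin_real_top openin_topspace)
  have "openin (real_top X act) (real_pts X act)"
    unfolding openin_real_top
  proof (intro conjI allI impI)
    fix n x assume "x \<in> X n"
    then have "{t \<in> cube n. char_map X act n x t \<in> real_pts X act} = topspace (cube_top n)"
      using char_in_pts by auto
    then show "openin (cube_top n) {t \<in> cube n. char_map X act n x t \<in> real_pts X act}"
      by (metis openin_topspace)
  qed simp
  then show "real_pts X act \<subseteq> topspace (real_top X act)" by (rule openin_subset)
qed

lemma cont_sum_cube: "continuous_map (cube_top n) euclideanreal (\<lambda>t. \<Sum>i<n. t i)"
  unfolding cube_top_def
  by (intro continuous_map_from_subtopology continuous_map_sum continuous_map_product_projection) auto

lemma cont_pot_cube: "continuous_map (cube_top n) euclidean (\<lambda>t. cis (2 * pi * (\<Sum>i<n. t i)))"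
proof -
  have 1: "continuous_map euclideanreal euclidean (\<lambda>s. cis (2 * pi * s))"
    by (simp add: cis_conv_exp continuous_intros)
  show ?thesis using continuous_map_compose[OF cont_sum_cube 1] by (simp add: o_def)
qed

lemma cont_Phi: "continuous_map (real_top X act) euclidean Phi"
  unfolding continuous_map_def
proof (intro conjI allI impI)
  fix U :: "complex set" assume "openin euclidean U"
  show "openin (real_top X act) {q \<in> topspace (real_top X act). Phi q \<in> U}"
    unfolding openin_real_top
  proof (intro conjI allI impI)
    fix n x assume x: "x \<in> X n"
    have "{t \<in> cube n. char_map X act n x t \<in> {q \<in> topspace (real_top X act). Phi q \<in> U}}
       = {t \<in> topspace (cube_top n). cis (2 * pi * (\<Sum>i<n. t i)) \<in> U}"
      using x by (auto simp: Phi_char char_in_pts)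
    then show "openin (cube_top n) {t \<in> cube n. char_map X act n x t \<in> {q \<in> topspace (real_top X act). Phi q \<in> U}}"
      using openin_continuous_map_preimage[OF cont_pot_cube \<open>openin euclidean U\<close>] by simp
  qed auto
qed auto




lemma circ_sub: "is_circulation T C \<Longrightarrow> openin T V \<Longrightarrow> C V \<subseteq> V \<times> V"
  unfolding is_circulation_def by blast

lemma circ_union: "is_circulation T C \<Longrightarrow> (\<And>V. V \<in> Ws \<Longrightarrow> openin T V) \<Longrightarrow>
   C (\<Union>Ws) = Id_on (\<Union>Ws) \<union> (\<Union>V\<in>Ws. C V)\<^sup>+"
  unfolding is_circulation_def pclosure_def by blast

lemma circ_mono: "is_circulation T C \<Longrightarrow> openin T V \<Longrightarrow> openin T W \<Longrightarrow> V \<subseteq> W \<Longrightarrow> C V \<subseteq> C W"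
proof -
  assume C: "is_circulation T C" and V: "openin T V" and W: "openin T W" and VW: "V \<subseteq> W"
  have "C (\<Union>{V, W}) = Id_on (\<Union>{V, W}) \<union> (\<Union>U\<in>{V, W}. C U)\<^sup>+"
    by (rule circ_union[OF C]) (use V W in auto)
  moreover have "\<Union>{V, W} = W" using VW by auto
  ultimately have "C W = Id_on W \<union> (C V \<union> C W)\<^sup>+" by simp
  then show ?thesis by auto
qed

lemma admissible_le:
  assumes C: "is_circulation (cube_top n) C"
    and proj: "\<forall>i<n. stream_map (cube_top n) C I_top I_circ (\<lambda>t. t i)"
    and W: "openin (cube_top n) W" and st: "(s, t) \<in> C W"
  shows "\<forall>i. s i \<le> t i"
proof
  fix i
  have Wc: "W \<subseteq> cube n" using openin_subset[OF W] by simp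
  have "C W \<subseteq> W \<times> W" by (rule circ_sub[OF C W])
  with st Wc have sc: "s \<in> cube n" and tc: "t \<in> cube n" by auto
  show "s i \<le> t i"
  proof (cases "i < n")
    case True
    have "C W \<subseteq> C (cube n)"
      by (rule circ_mono[OF C W]) (use Wc in \<open>auto intro: openin_topspace[of "cube_top n", simplified]\<close>)
    with st have st': "(s, t) \<in> C (cube n)" by auto
    have op: "openin I_top {0..1}" unfolding I_top_def by (simp add: openin_topspace[of "top_of_set {0..1::real}", simplified])
    have eq: "{z \<in> topspace (cube_top n). z i \<in> {0..1}} = cube n"
      using True by (auto simp: cube_def)
    from proj True have sm: "stream_map (cube_top n) C I_top I_circ (\<lambda>t. t i)" by blast
    have "(s i, t i) \<in> I_circ {0..1}"
    proof -
      from sm op have "\<forall>x y. (x, y) \<in> C {z \<in> topspace (cube_top n). z i \<in> {0..1}} \<longrightarrow> (x i, y i) \<in> I_circ {0..1}"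
        unfolding stream_map_def by blast
      then show ?thesis using st' unfolding eq by blast
    qed
    then show ?thesis by (simp add: I_circ_def)
  next
    case False
    then show ?thesis using sc tc by (simp add: cube_def)
  qed
qed

lemma admissible_lab:
  assumes C: "is_circulation (cube_top n) C"
    and W: "openin (cube_top n) W" and lab: "\<And>k. openin (cube_top n) {r \<in> W. lab r = k}"
    and st: "(s, t) \<in> C W"
  shows "s \<in> W \<and> t \<in> W \<and> lab s = lab t"
proof -
  let ?Ws = "range (\<lambda>k. {r \<in> W. lab r = k})"
  have U: "\<Union>?Ws = W" by auto
  have "C (\<Union>?Ws) = Id_on (\<Union>?Ws) \<union> (\<Union>V\<in>?Ws. C V)\<^sup>+"
    by (rule circ_union[OF C]) (use lab in auto)
  then have eq: "C W = Id_on W \<union> (\<Union>V\<in>?Ws. C V)\<^sup>+" unfolding U .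
  have gen: "a \<in> W \<and> b \<in> W \<and> lab a = lab b" if "(a, b) \<in> (\<Union>V\<in>?Ws. C V)" for a b
  proof -
    from that obtain k where "(a, b) \<in> C {r \<in> W. lab r = k}" by auto
    moreover have "C {r \<in> W. lab r = k} \<subseteq> {r \<in> W. lab r = k} \<times> {r \<in> W. lab r = k}"
      by (rule circ_sub[OF C lab])
    ultimately show ?thesis by auto
  qed
  have "a \<in> W \<and> b \<in> W \<and> lab a = lab b" if "(a, b) \<in> (\<Union>V\<in>?Ws. C V)\<^sup>+" for a b
    using that
  proof (induction rule: trancl_induct)
    case (base y)
    then show ?case using gen by blast
  next
    case (step y z)
    then show ?case using gen[of y z] by auto
  qed
  note tr = this
  from st eq have "(s, t) \<in> Id_on W \<or> (s, t) \<in> (\<Union>V\<in>?Ws. C V)\<^sup>+" by blast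
  then show ?thesis
  proof
    assume "(s, t) \<in> Id_on W" then show ?thesis by (auto simp: Id_on_def)
  qed (rule tr)
qed

lemma cube_circ_prop:
  assumes W: "openin (cube_top n) W" and lab: "\<And>k. openin (cube_top n) {r \<in> W. lab r = k}"
    and st: "(s, t) \<in> cube_circ n W"
  shows "s \<in> W \<and> t \<in> W \<and> lab s = lab t \<and> (\<forall>i. s i \<le> t i)"
proof -
  let ?R = "\<Union>{C W | C. is_circulation (cube_top n) C \<and>
        (\<forall>i<n. stream_map (cube_top n) C I_top I_circ (\<lambda>t. t i))}"
  have gen: "a \<in> W \<and> b \<in> W \<and> lab a = lab b \<and> (\<forall>i. a i \<le> b i)" if "(a, b) \<in> ?R" for a b
  proof -
    from that obtain C where C: "is_circulation (cube_top n) C"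
      and proj: "\<forall>i<n. stream_map (cube_top n) C I_top I_circ (\<lambda>t. t i)" and ab: "(a, b) \<in> C W"
      by blast
    show ?thesis using admissible_le[OF C proj W ab] admissible_lab[OF C W lab ab] by blast
  qed
  have "a \<in> W \<and> b \<in> W \<and> lab a = lab b \<and> (\<forall>i. a i \<le> b i)" if "(a, b) \<in> ?R\<^sup>+" for a b
    using that
  proof (induction rule: trancl_induct)
    case (base y)
    then show ?case using gen by blast
  next
    case (step y z)
    then have "a \<in> W \<and> z \<in> W \<and> lab a = lab z" using gen[of y z] by auto
    moreover have "\<forall>i. a i \<le> z i"
    proof
      fix i show "a i \<le> z i" using step gen[of y z] by (meson order_trans)
    qed
    ultimately show ?case by blast
  qed
  note tr = this
  from st have "(s, t) \<in> Id_on W \<or> (s, t) \<in> ?R\<^sup>+" unfolding cube_circ_def pclosure_def by blast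
  then show ?thesis
  proof
    assume "(s, t) \<in> Id_on W" then show ?thesis by (auto simp: Id_on_def)
  qed (rule tr)
qed




lemma cos_gt_half: "\<bar>u\<bar> < pi/3 \<Longrightarrow> cos u > 1/2"
proof -
  assume "\<bar>u\<bar> < pi/3"
  then have "cos (pi/3) < cos \<bar>u\<bar>" by (intro cos_monotone_0_pi) auto
  then show ?thesis by (simp add: cos_60)
qed

lemma cos_gt_half_rev: "cos v > 1/2 \<Longrightarrow> \<bar>v\<bar> \<le> pi \<Longrightarrow> \<bar>v\<bar> < pi/3"
proof (rule ccontr)
  assume "cos v > 1/2" "\<bar>v\<bar> \<le> pi" "\<not> \<bar>v\<bar> < pi/3"
  then have "cos \<bar>v\<bar> \<le> cos (pi/3)" by (intro cos_monotone_0_pi_le) auto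
  with \<open>cos v > 1/2\<close> show False by (simp add: cos_60)
qed

lemma cis_shift_int: "cis (a - 2 * pi * of_int k) = cis a"
proof -
  have "cis (2 * pi * of_int (-k)) = 1" by (rule cis_multiple_2pi) simp
  then have "cis a * cis (2 * pi * of_int (-k)) = cis a" by simp
  then show ?thesis by (simp add: cis_mult)
qed

lemma near_int: "cos w > 1/2 \<Longrightarrow> \<exists>k::int. \<bar>w - 2 * pi * of_int k\<bar> < pi/3"
proof -
  assume c: "cos w > 1/2"
  define k where "k = \<lfloor>w / (2 * pi) + 1/2\<rfloor>"
  have k1: "of_int k \<le> w / (2 * pi) + 1/2" and k2: "w / (2 * pi) + 1/2 < of_int k + 1"
    unfolding k_def by linarith+
  have pi: "pi > 0" by simp
  from k1 have a: "2 * pi * of_int k \<le> w + pi" using pi by (simp add: field_simps)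
  from k2 have b: "w + pi < 2 * pi * of_int k + 2 * pi" using pi by (simp add: field_simps)
  have "cos (w - 2 * pi * of_int k) = cos w"
    using cis_shift_int[of w k] by (metis cis.sel(1))
  then have "\<bar>w - 2 * pi * of_int k\<bar> < pi/3"
    using c a b by (intro cos_gt_half_rev) auto
  then show ?thesis by blast
qed

lemma k_unique: "\<bar>w - 2 * pi * of_int k\<bar> < pi/3 \<Longrightarrow> \<bar>w - 2 * pi * of_int k'\<bar> < pi/3 \<Longrightarrow> k = k'"
proof -
  assume a: "\<bar>w - 2 * pi * of_int k\<bar> < pi/3" and b: "\<bar>w - 2 * pi * of_int k'\<bar> < pi/3"
  have "\<bar>2 * pi * (of_int k - of_int k')\<bar> < 2 * pi * 1" using a b by (simp add: abs_if algebra_simps split: if_splits)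
  then have "\<bar>of_int k - of_int k' :: real\<bar> < 1" by (simp add: abs_mult)
  then show ?thesis by linarith
qed

lemma cis_unique: "\<bar>u - a\<bar> < pi/3 \<Longrightarrow> \<bar>u' - a\<bar> < pi/3 \<Longrightarrow> cis u = cis u' \<Longrightarrow> u = u'"
proof -
  assume a: "\<bar>u - a\<bar> < pi/3" and b: "\<bar>u' - a\<bar> < pi/3" and c: "cis u = cis u'"
  have "cos u = cos u'" "sin u = sin u'" using c by (metis cis.sel(1), metis cis.sel(2))
  then have "cos (u - u') = 1" by (simp add: cos_diff)
  then obtain n :: int where n: "u - u' = of_int n * 2 * pi" using cos_one_2pi_int by blast
  have "\<bar>u - u'\<bar> < pi" using a b by linarith
  then have "\<bar>of_int n * 2 * pi\<bar> < 1 * pi" using n by simp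
  then have "\<bar>of_int n :: real\<bar> * 2 < 1" by (simp add: abs_mult)
  then have "n = 0" by linarith
  with n show ?thesis by simp
qed




lemma Phi_sphere: "q \<in> real_pts X act \<Longrightarrow> Phi q \<in> sphere 0 1"
  unfolding real_pts_def
proof (erule quotientE)
  fix p assume p: "p \<in> real_dom X" and q: "q = real_rel X act `` {p}"
  show "Phi q \<in> sphere 0 1" using Phi_class[OF p] q by (simp add: pot_def)
qed

lemma cis_Arg2pi_sphere: "z \<in> sphere 0 1 \<Longrightarrow> z = cis (Arg2pi z) \<and> 0 \<le> Arg2pi z \<and> Arg2pi z \<le> 2 * pi"
  using Arg2pi[of z] by (auto simp: is_Arg_def cis_conv_exp)

lemma key_local:
  fixes X :: "nat \<Rightarrow> 'a set" and act :: "cmor \<Rightarrow> 'a \<Rightarrow> 'a"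
    and \<gamma> :: "complex \<Rightarrow> (nat \<times> 'a \<times> (nat \<Rightarrow> real)) set"
  assumes sm: "stream_map circle_top circle_circ (real_top X act) (real_circ X act) \<gamma>"
    and he: "\<And>\<phi>. Phi (\<gamma> (cis \<phi>)) = cis (h \<phi>)"
    and close: "\<And>\<phi>. \<theta> \<le> \<phi> \<Longrightarrow> \<phi> \<le> \<theta>' \<Longrightarrow> \<bar>h \<phi> - h \<theta>\<bar> < pi/3"
    and le: "\<theta> \<le> \<theta>'"
  shows "h \<theta> \<le> h \<theta>' \<and> (h \<theta> = h \<theta>' \<longrightarrow> \<gamma> (cis \<theta>) = \<gamma> (cis \<theta>'))"
proof -
  have cont: "continuous_map circle_top (real_top X act) \<gamma>" using sm by (simp add: stream_map_def)
  have ts: "topspace circle_top = sphere 0 1" by (simp add: circle_top_def)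
  have gpts: "\<gamma> z \<in> real_pts X act" if "z \<in> sphere 0 1" for z
    using continuous_map_image_subset_topspace[OF cont] that ts by auto
  define h0 where "h0 = h \<theta>"
  define V where "V = {q \<in> real_pts X act. Re (Phi q * cnj (cis h0)) > 1/2}"
  have Vo: "openin (real_top X act) V"
  proof -
    have "open {w::complex. 1/2 < Re (w * cnj (cis h0))}"
      by (intro open_Collect_less continuous_intros)
    then have "openin euclidean {w::complex. 1/2 < Re (w * cnj (cis h0))}" by simp
    from openin_continuous_map_preimage[OF cont_Phi this] show ?thesis
      by (simp add: V_def)
  qed
  have inV: "\<gamma> (cis \<phi>) \<in> V" if "\<theta> \<le> \<phi>" "\<phi> \<le> \<theta>'" for \<phi>
  proof -
    have "cis (h \<phi>) * cnj (cis h0) = cis (h \<phi> - h0)" by (simp add: cis_cnj cis_mult)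
    then have "Re (Phi (\<gamma> (cis \<phi>)) * cnj (cis h0)) = cos (h \<phi> - h0)" by (simp add: he)
    moreover have "cos (h \<phi> - h0) > 1/2" using close[OF that] by (intro cos_gt_half) (simp add: h0_def)
    ultimately show ?thesis unfolding V_def using gpts[of "cis \<phi>"] by simp
  qed
  have sub: "cis ` {\<theta>..\<theta>'} \<subseteq> {z \<in> topspace circle_top. \<gamma> z \<in> V}"
    unfolding ts using inV by auto
  have arc: "(cis \<theta>, cis \<theta>') \<in> circle_circ {z \<in> topspace circle_top. \<gamma> z \<in> V}"
    unfolding circle_circ_def mem_Collect_eq prod.case
    by (intro exI[of _ \<theta>] exI[of _ \<theta>'] conjI le refl sub)
  have rc: "(\<gamma> (cis \<theta>), \<gamma> (cis \<theta>')) \<in> real_circ X act V"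
    using sm Vo arc unfolding stream_map_def by blast
  define L where "L (q :: (nat \<times> 'a \<times> (nat \<Rightarrow> real)) set) = (SOME u. \<bar>u - h0\<bar> < pi/3 \<and> Phi q = cis u)" for q
  have Lchar: "L q = u" if "\<bar>u - h0\<bar> < pi/3" "Phi q = cis u" for q u
  proof -
    have "\<exists>u. \<bar>u - h0\<bar> < pi/3 \<and> Phi q = cis u" using that by blast
    then have "\<bar>L q - h0\<bar> < pi/3 \<and> Phi q = cis (L q)"
      unfolding L_def by (rule someI_ex)
    then have a: "\<bar>L q - h0\<bar> < pi/3" and b: "Phi q = cis (L q)" by auto
    have "cis (L q) = cis u" using b that(2) by simp
    then show ?thesis by (rule cis_unique[OF a that(1)])
  qed
  have Lg: "L (\<gamma> (cis \<phi>)) = h \<phi>" if "\<theta> \<le> \<phi>" "\<phi> \<le> \<theta>'" for \<phi>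
    using close[OF that] he by (intro Lchar) (auto simp: h0_def)
  define R where "R = {(char_map X act n x s, char_map X act n x t) | n x s t.
        x \<in> X n \<and> (s, t) \<in> cube_circ n {r \<in> cube n. char_map X act n x r \<in> V}}"
  have G: "L a \<le> L b \<and> (L a = L b \<longrightarrow> a = b)" if "(a, b) \<in> R" for a b
  proof -
    from that obtain n x s t where a: "a = char_map X act n x s" and b: "b = char_map X act n x t"
      and x: "x \<in> X n" and st: "(s, t) \<in> cube_circ n {r \<in> cube n. char_map X act n x r \<in> V}"
      unfolding R_def by blast
    define W where "W = {r \<in> cube n. char_map X act n x r \<in> V}"
    have Wo: "openin (cube_top n) W" using Vo x unfolding openin_real_top W_def by blast
    have Wc: "W \<subseteq> cube n" unfolding W_def by auto
    define lab where "lab r = (SOME k::int. \<bar>2 * pi * (\<Sum>i<n. r i) - h0 - 2 * pi * of_int k\<bar> < pi/3)" for r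
    have labP: "\<bar>2 * pi * (\<Sum>i<n. r i) - h0 - 2 * pi * of_int (lab r)\<bar> < pi/3" if "r \<in> W" for r
    proof -
      have rc: "r \<in> cube n" and rV: "char_map X act n x r \<in> V" using that unfolding W_def by auto
      have "Re (cis (2 * pi * (\<Sum>i<n. r i)) * cnj (cis h0)) > 1/2"
        using rV Phi_char[where X=X and n=n and x=x and t=r and act=act, OF x rc] unfolding V_def by simp
      moreover have "cis (2 * pi * (\<Sum>i<n. r i)) * cnj (cis h0) = cis (2 * pi * (\<Sum>i<n. r i) - h0)"
        by (simp add: cis_cnj cis_mult)
      ultimately have "cos (2 * pi * (\<Sum>i<n. r i) - h0) > 1/2" by simp
      from near_int[OF this] obtain k :: int where "\<bar>2 * pi * (\<Sum>i<n. r i) - h0 - 2 * pi * of_int k\<bar> < pi/3"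
        by blast
      then show ?thesis unfolding lab_def by (rule someI)
    qed
    have labO: "openin (cube_top n) {r \<in> W. lab r = k}" for k
    proof -
      let ?F = "\<lambda>r. 2 * pi * (\<Sum>i<n. r i) - h0 - 2 * pi * of_int k"
      have cF: "continuous_map (cube_top n) euclideanreal ?F"
      proof -
        have 1: "continuous_map euclideanreal euclideanreal (\<lambda>s. 2 * pi * s - h0 - 2 * pi * of_int k)"
          by (simp add: continuous_intros)
        show ?thesis using continuous_map_compose[OF cont_sum_cube 1] by (simp add: o_def)
      qed
      have "open {y::real. \<bar>y\<bar> < pi/3}" by (intro open_Collect_less continuous_intros)
      then have "openin euclideanreal {y::real. \<bar>y\<bar> < pi/3}" by simp
      from openin_continuous_map_preimage[OF cF this]
      have o1: "openin (cube_top n) {r \<in> cube n. \<bar>?F r\<bar> < pi/3}" by simp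
      have eq: "{r \<in> W. lab r = k} = W \<inter> {r \<in> cube n. \<bar>?F r\<bar> < pi/3}"
      proof (intro set_eqI iffI)
        fix r assume "r \<in> {r \<in> W. lab r = k}"
        then show "r \<in> W \<inter> {r \<in> cube n. \<bar>?F r\<bar> < pi/3}" using labP[of r] Wc by auto
      next
        fix r assume r: "r \<in> W \<inter> {r \<in> cube n. \<bar>?F r\<bar> < pi/3}"
        then have "lab r = k"
          using k_unique[of "2 * pi * (\<Sum>i<n. r i) - h0" "lab r" k] labP[of r] by (auto simp: algebra_simps)
        then show "r \<in> {r \<in> W. lab r = k}" using r by auto
      qed
      show ?thesis unfolding eq by (rule openin_Int[OF Wo o1])
    qed
    have P: "s \<in> W \<and> t \<in> W \<and> lab s = lab t \<and> (\<forall>i. s i \<le> t i)"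
      by (rule cube_circ_prop[OF Wo labO]) (use st in \<open>simp add: W_def\<close>)
    have Lr: "L (char_map X act n x r) = 2 * pi * (\<Sum>i<n. r i) - 2 * pi * of_int (lab r)" if "r \<in> W" for r
    proof (rule Lchar)
      show "\<bar>2 * pi * (\<Sum>i<n. r i) - 2 * pi * of_int (lab r) - h0\<bar> < pi / 3"
        using labP[OF that] by (simp add: algebra_simps)
      have "r \<in> cube n" using that Wc by auto
      then show "Phi (char_map X act n x r) = cis (2 * pi * (\<Sum>i<n. r i) - 2 * pi * of_int (lab r))"
        using Phi_char[where X=X and n=n and x=x and t=r and act=act, OF x] cis_shift_int by simp
    qed
    have sl: "(\<Sum>i<n. s i) \<le> (\<Sum>i<n. t i)" using P by (intro sum_mono) auto
    have La: "L a = 2 * pi * (\<Sum>i<n. s i) - 2 * pi * of_int (lab s)" using Lr P a by blast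
    have Lb: "L b = 2 * pi * (\<Sum>i<n. t i) - 2 * pi * of_int (lab s)" using Lr P b by metis
    have "L a \<le> L b" using La Lb sl by simp
    moreover have "a = b" if "L a = L b"
    proof -
      have "(\<Sum>i<n. s i) = (\<Sum>i<n. t i)" using that La Lb by simp
      then have "(\<Sum>i<n. t i - s i) = 0" by (simp add: sum_subtractf)
      then have z: "\<forall>i\<in>{..<n}. t i - s i = 0"
        using P by (subst sum_nonneg_eq_0_iff[symmetric]) auto
      have "s = t"
      proof
        fix i show "s i = t i"
        proof (cases "i < n")
          case True then show ?thesis using z by auto
        next
          case False
          have "s \<in> cube n" "t \<in> cube n" using P Wc by auto
          then show ?thesis using False by (simp add: cube_def)
        qed
      qed
      then show ?thesis using a b by simp
    qed
    ultimately show ?thesis by blast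
  qed
  have Gt: "L a \<le> L b \<and> (L a = L b \<longrightarrow> a = b)" if "(a, b) \<in> R\<^sup>+" for a b
    using that
  proof (induction rule: trancl_induct)
    case (base y) then show ?case by (rule G)
  next
    case (step y z)
    have "L y \<le> L z \<and> (L y = L z \<longrightarrow> y = z)" by (rule G[OF step(2)])
    with step(3) show ?case by fastforce
  qed
  have "real_circ X act V = Id_on V \<union> R\<^sup>+"
    unfolding real_circ_def pclosure_def R_def by simp
  with rc have "\<gamma> (cis \<theta>) = \<gamma> (cis \<theta>') \<or> (\<gamma> (cis \<theta>), \<gamma> (cis \<theta>')) \<in> R\<^sup>+" by auto
  moreover have "L (\<gamma> (cis \<theta>)) = h \<theta>" "L (\<gamma> (cis \<theta>')) = h \<theta>'" using Lg le by auto
  ultimately show ?thesis using Gt by force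
qed




theorem mainTheorem5:
  fixes X :: "nat \<Rightarrow> 'a set" and act :: "cmor \<Rightarrow> 'a \<Rightarrow> 'a"
    and \<gamma> :: "complex \<Rightarrow> (nat \<times> 'a \<times> (nat \<Rightarrow> real)) set"
  assumes "precubical X act"
    and "stream_map circle_top circle_circ (real_top X act) (real_circ X act) \<gamma>"
  shows "(\<exists>c. \<forall>z\<in>sphere 0 1. \<gamma> z = c) \<longleftrightarrow>
         (\<exists>a\<in>topspace (real_top X act).
            homotopic_with (\<lambda>_. True) circle_top (real_top X act) \<gamma> (\<lambda>_. a))"
proof -
  have sm: "stream_map circle_top circle_circ (real_top X act) (real_circ X act) \<gamma>" by fact
  have cont: "continuous_map circle_top (real_top X act) \<gamma>" using sm by (simp add: stream_map_def)
  have ts: "topspace circle_top = sphere 0 1" by (simp add: circle_top_def)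
  have gpts: "\<gamma> z \<in> topspace (real_top X act)" if "z \<in> sphere 0 1" for z
    using continuous_map_image_subset_topspace[OF cont] that ts by auto
  show ?thesis
  proof
    assume "\<exists>c. \<forall>z\<in>sphere 0 1. \<gamma> z = c"
    then obtain c where c: "\<forall>z\<in>sphere 0 1. \<gamma> z = c" by blast
    have "(1::complex) \<in> sphere 0 1" by simp
    then have cin: "c \<in> topspace (real_top X act)" using gpts c by metis
    have "homotopic_with (\<lambda>_. True) circle_top (real_top X act) \<gamma> (\<lambda>_. c)"
      by (rule homotopic_with_equal) (use cont c ts in auto)
    with cin show "\<exists>a\<in>topspace (real_top X act).
            homotopic_with (\<lambda>_. True) circle_top (real_top X act) \<gamma> (\<lambda>_. a)" by blast
  next
    assume "\<exists>a\<in>topspace (real_top X act).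
            homotopic_with (\<lambda>_. True) circle_top (real_top X act) \<gamma> (\<lambda>_. a)"
    then obtain a where hom: "homotopic_with (\<lambda>_. True) circle_top (real_top X act) \<gamma> (\<lambda>_. a)"
      by blast
    have cPhS: "continuous_map (real_top X act) (top_of_set (sphere 0 1)) Phi"
      by (rule continuous_map_into_subtopology[OF cont_Phi]) (auto intro: Phi_sphere)
    have "homotopic_with (\<lambda>_. True) circle_top (top_of_set (sphere 0 1)) (Phi \<circ> \<gamma>) (Phi \<circ> (\<lambda>_. a))"
      by (rule homotopic_with_compose_continuous_map_left[OF hom cPhS]) simp
    then have "homotopic_with_canon (\<lambda>h. True) (sphere 0 1) (sphere 0 1) (Phi \<circ> \<gamma>) (\<lambda>t. Phi a)"
      by (simp add: circle_top_def o_def)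
    then obtain g where gc: "continuous_on (sphere 0 1) g"
      and ge: "\<forall>x\<in>sphere 0 1. (Phi \<circ> \<gamma>) x = exp (\<i> * of_real (g x))"
      using inessential_eq_continuous_logarithm_circle[of "sphere 0 1" "Phi \<circ> \<gamma>"] by blast
    define h where "h \<theta> = g (cis \<theta>)" for \<theta>
    have ccis: "continuous_on UNIV (\<lambda>x. cis x)" by (simp add: cis_conv_exp continuous_intros)
    have hc: "continuous_on UNIV h"
      unfolding h_def by (rule continuous_on_compose2[OF gc ccis]) auto
    have he: "Phi (\<gamma> (cis \<phi>)) = cis (h \<phi>)" for \<phi>
      using ge[rule_format, of "cis \<phi>"] by (simp add: h_def cis_conv_exp)
    have "uniformly_continuous_on {0..2*pi} h"
      by (rule compact_uniformly_continuous[OF continuous_on_subset[OF hc]]) auto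
    then obtain d where d0: "d > 0"
      and d: "\<And>x x'. x \<in> {0..2*pi} \<Longrightarrow> x' \<in> {0..2*pi} \<Longrightarrow> dist x' x < d \<Longrightarrow> dist (h x') (h x) < pi/3"
      unfolding uniformly_continuous_on_def by (metis pi_gt_zero divide_pos_pos zero_less_numeral)
    have K: "h \<theta> \<le> h \<theta>' \<and> (h \<theta> = h \<theta>' \<longrightarrow> \<gamma> (cis \<theta>) = \<gamma> (cis \<theta>'))"
      if "0 \<le> \<theta>" "\<theta> \<le> \<theta>'" "\<theta>' \<le> 2*pi" "\<theta>' - \<theta> < d" for \<theta> \<theta>'
    proof (rule key_local[OF sm he _ that(2)])
      fix \<phi> assume "\<theta> \<le> \<phi>" "\<phi> \<le> \<theta>'"
      then show "\<bar>h \<phi> - h \<theta>\<bar> < pi/3" using d[of \<theta> \<phi>] that by (auto simp: dist_real_def)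
    qed
    have M: "h \<theta> \<le> h \<theta>' \<and> (h \<theta> = h \<theta>' \<longrightarrow> \<gamma> (cis \<theta>) = \<gamma> (cis \<theta>'))"
      if "0 \<le> \<theta>" "\<theta> \<le> \<theta>'" "\<theta>' \<le> 2*pi" "\<theta>' - \<theta> \<le> real N * (d/2)" for N \<theta> \<theta>'
      using that
    proof (induction N arbitrary: \<theta>')
      case 0
      then show ?case by simp
    next
      case (Suc N)
      show ?case
      proof (cases "\<theta>' - \<theta> < d")
        case True
        then show ?thesis using K Suc.prems by blast
      next
        case False
        define m where "m = \<theta>' - d/2"
        have m1: "\<theta> \<le> m" "m \<le> 2*pi" "m - \<theta> \<le> real N * (d/2)"
          using False Suc.prems d0 by (auto simp: m_def algebra_simps)
        have IH: "h \<theta> \<le> h m \<and> (h \<theta> = h m \<longrightarrow> \<gamma> (cis \<theta>) = \<gamma> (cis m))"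
          using Suc.IH[of m] Suc.prems m1 by blast
        have K2: "h m \<le> h \<theta>' \<and> (h m = h \<theta>' \<longrightarrow> \<gamma> (cis m) = \<gamma> (cis \<theta>'))"
          using K[of m \<theta>'] Suc.prems m1 d0 by (auto simp: m_def)
        show ?thesis using IH K2 by force
      qed
    qed
    obtain N :: nat where N: "2 * pi / (d/2) < real N" using reals_Archimedean2 by blast
    have Nd: "2 * pi \<le> real N * (d/2)" using N d0 by (simp add: field_simps)
    have h2: "h (2*pi) = h 0" by (simp add: h_def)
    have const: "\<gamma> (cis \<theta>) = \<gamma> (cis 0)" if "0 \<le> \<theta>" "\<theta> \<le> 2*pi" for \<theta>
    proof -
      have A: "h 0 \<le> h \<theta> \<and> (h 0 = h \<theta> \<longrightarrow> \<gamma> (cis 0) = \<gamma> (cis \<theta>))"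
        using M[of 0 \<theta> N] that Nd by auto
      have B: "h \<theta> \<le> h (2*pi)"
        using M[of \<theta> "2*pi" N] that Nd by auto
      show ?thesis using A B h2 by auto
    qed
    show "\<exists>c. \<forall>z\<in>sphere 0 1. \<gamma> z = c"
    proof (intro exI ballI)
      fix z :: complex assume "z \<in> sphere 0 1"
      then show "\<gamma> z = \<gamma> (cis 0)" using cis_Arg2pi_sphere[of z] const by metis
    qed
  qed
qed


end
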